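(* Let $0\le\lambda<1$ and $N=1$. Then for $0\le\delta\le1$, $$\zeta(1,\delta,\lambda)=\max\Big\{0,\frac{\lambda(\delta-\lambda)}{1-\lambda},\frac{\delta(2-\lambda)-1}{1-\lambda}\Big\}=\begin{cases}0,&0\le\delta\le\lambda,\\ \frac{\lambda(\delta-\lambda)}{1-\lambda},&\lambda\le\delta\le\frac{1+\lambda}{2},\\ \frac{\delta(2-\lambda)-1}{1-\lambda},&\frac{1+\lambda}{2}\le\delta\le1.\end{cases}$$
   Context: Let $\mathcal H$ be a Hilbert space of finite dimension $D\ge 2$ and $|\Psi\rangle\in\mathcal H$ a unit vector. For $0\le\lambda<1$ let $\Omega_\lambda=|\Psi\rangle\langle\Psi|+\lambda(1-|\Psi\rangle\langle\Psi|)$. For an integer $N\ge1$ and a density operator $\rho$ on $\mathcal H^{\otimes(N+1)}$ put $p_\rho=\mathrm{tr}[(\Omega_\lambda^{\otimes N}\otimes 1)\rho]$ and $f_\rho=\mathrm{tr}[(\Omega_\lambda^{\otimes N}\otimes|\Psi\rangle\langle\Psi|)\rho]$, and $\zeta(N,\delta,\lambda)=\min\{f_\rho:p_\rho\ge\delta\}$, the minimum over permutation-invariant density operators on $\mathcal H^{\otimes(N+1)}$. *)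

theory Defs
  imports Complex_Main "Jordan_Normal_Form.Matrix"
begin

text \<open>Operators on the finite-dimensional Hilbert space C^D are complex D x D matrices;
  operators on C^D tensor C^D are (D*D) x (D*D) matrices, with the basis vector
  e_a tensor e_b having index a*D+b.\<close>

definition mtrace :: "complex mat \<Rightarrow> complex" where
  "mtrace A = (\<Sum>i<dim_row A. A $$ (i, i))"

definition kron :: "complex mat \<Rightarrow> complex mat \<Rightarrow> complex mat" where
  "kron A B = mat (dim_row A * dim_row B) (dim_col A * dim_col B)
     (\<lambda>(i, j). A $$ (i div dim_row B, j div dim_col B) * B $$ (i mod dim_row B, j mod dim_col B))"

definition ket_bra :: "complex vec \<Rightarrow> complex mat" where
  "ket_bra \<psi> = mat (dim_vec \<psi>) (dim_vec \<psi>) (\<lambda>(i, j). \<psi> $ i * cnj (\<psi> $ j))"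

definition unit_vec_C :: "nat \<Rightarrow> complex vec \<Rightarrow> bool" where
  "unit_vec_C D \<psi> \<longleftrightarrow> \<psi> \<in> carrier_vec D \<and> (\<Sum>i<D. (cmod (\<psi> $ i))\<^sup>2) = 1"

definition Omega :: "real \<Rightarrow> complex vec \<Rightarrow> complex mat" where
  "Omega lam \<psi> = ket_bra \<psi> + complex_of_real lam \<cdot>\<^sub>m (1\<^sub>m (dim_vec \<psi>) - ket_bra \<psi>)"

definition psd :: "nat \<Rightarrow> complex mat \<Rightarrow> bool" where
  "psd n A \<longleftrightarrow> A \<in> carrier_mat n n \<and>
     (\<forall>v \<in> carrier_vec n. Im (conjugate v \<bullet> (A *\<^sub>v v)) = 0 \<and> Re (conjugate v \<bullet> (A *\<^sub>v v)) \<ge> 0)"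

definition density_op :: "nat \<Rightarrow> complex mat \<Rightarrow> bool" where
  "density_op n \<rho> \<longleftrightarrow> psd n \<rho> \<and> mtrace \<rho> = 1"

definition swap_op :: "nat \<Rightarrow> complex mat" where
  "swap_op D = mat (D * D) (D * D)
     (\<lambda>(i, j). if i = (j mod D) * D + j div D then 1 else 0)"

text \<open>Permutation invariance on two copies (the only nontrivial permutation is the swap).\<close>
definition perm_inv2 :: "nat \<Rightarrow> complex mat \<Rightarrow> bool" where
  "perm_inv2 D \<rho> \<longleftrightarrow> swap_op D * \<rho> * swap_op D = \<rho>"

text \<open>p_rho and f_rho for N = 1 (traces of products of positive operators, hence real).\<close>
definition p_val :: "real \<Rightarrow> complex vec \<Rightarrow> complex mat \<Rightarrow> real" where
  "p_val lam \<psi> \<rho> = Re (mtrace (kron (Omega lam \<psi>) (1\<^sub>m (dim_vec \<psi>)) * \<rho>))"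

definition f_val :: "real \<Rightarrow> complex vec \<Rightarrow> complex mat \<Rightarrow> real" where
  "f_val lam \<psi> \<rho> = Re (mtrace (kron (Omega lam \<psi>) (ket_bra \<psi>) * \<rho>))"

definition feasible1 :: "nat \<Rightarrow> real \<Rightarrow> complex vec \<Rightarrow> real \<Rightarrow> complex mat set" where
  "feasible1 D lam \<psi> \<delta> = {\<rho>. density_op (D * D) \<rho> \<and> perm_inv2 D \<rho> \<and> p_val lam \<psi> \<rho> \<ge> \<delta>}"

definition is_zeta1 :: "nat \<Rightarrow> real \<Rightarrow> complex vec \<Rightarrow> real \<Rightarrow> real \<Rightarrow> bool" where
  "is_zeta1 D lam \<psi> \<delta> z \<longleftrightarrow>
     (\<exists>\<rho> \<in> feasible1 D lam \<psi> \<delta>. f_val lam \<psi> \<rho> = z) \<and>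
     (\<forall>\<rho> \<in> feasible1 D lam \<psi> \<delta>. z \<le> f_val lam \<psi> \<rho>)"

end

theory Submission imports Defs begin

definition Tr :: "nat \<Rightarrow> (nat \<Rightarrow> nat \<Rightarrow> complex) \<Rightarrow> (nat \<Rightarrow> nat \<Rightarrow> complex) \<Rightarrow> complex" where
  "Tr n m r = (\<Sum>i<n. \<Sum>k<n. m i k * r k i)"

definition Bf :: "nat \<Rightarrow> (nat \<Rightarrow> complex) \<Rightarrow> (nat \<Rightarrow> nat \<Rightarrow> complex) \<Rightarrow> (nat \<Rightarrow> complex) \<Rightarrow> complex" where
  "Bf n x m y = (\<Sum>i<n. \<Sum>k<n. cnj (x i) * m i k * y k)"

definition KR :: "nat \<Rightarrow> (nat \<Rightarrow> nat \<Rightarrow> complex) \<Rightarrow> (nat \<Rightarrow> nat \<Rightarrow> complex) \<Rightarrow> nat \<Rightarrow> nat \<Rightarrow> complex" where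
  "KR D X Y = (\<lambda>i k. X (i div D) (k div D) * Y (i mod D) (k mod D))"

definition tens :: "nat \<Rightarrow> (nat \<Rightarrow> complex) \<Rightarrow> (nat \<Rightarrow> complex) \<Rightarrow> nat \<Rightarrow> complex" where
  "tens D u w = (\<lambda>i. u (i div D) * w (i mod D))"

definition ent :: "complex mat \<Rightarrow> nat \<Rightarrow> nat \<Rightarrow> complex" where
  "ent A = (\<lambda>i k. A $$ (i, k))"

definition Idf :: "nat \<Rightarrow> nat \<Rightarrow> complex" where
  "Idf = (\<lambda>i k. if i = k then 1 else 0)"

definition R1 :: "(nat \<Rightarrow> complex) \<Rightarrow> nat \<Rightarrow> nat \<Rightarrow> complex" where
  "R1 v = (\<lambda>i k. v i * cnj (v k))"

lemma mtrace_mult: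
  assumes "A \<in> carrier_mat n n" "B \<in> carrier_mat n n"
  shows "mtrace (A * B) = Tr n (ent A) (ent B)"
  using assms unfolding mtrace_def Tr_def ent_def
  by (auto simp: scalar_prod_def intro!: sum.cong)

lemma Tr_cong:
  assumes "\<And>i k. i < n \<Longrightarrow> k < n \<Longrightarrow> m i k = m' i k"
  shows "Tr n m r = Tr n m' r"
  using assms unfolding Tr_def by (auto intro!: sum.cong)

lemma Tr_lin:
  "Tr n (\<lambda>i k. a * m1 i k + b * m2 i k) r = a * Tr n m1 r + b * Tr n m2 r"
  unfolding Tr_def by (simp add: sum.distrib sum_distrib_left algebra_simps)

lemma Tr_sum:
  "Tr n (\<lambda>i k. \<Sum>j\<in>J. m j i k) r = (\<Sum>j\<in>J. Tr n (m j) r)"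
  unfolding Tr_def by (simp add: sum_distrib_right sum.swap[of _ J])

lemma Bf_lin:
  "Bf n x (\<lambda>i k. a * m1 i k + b * m2 i k) y = a * Bf n x m1 y + b * Bf n x m2 y"
  unfolding Bf_def by (simp add: sum.distrib sum_distrib_left algebra_simps)

lemma Tr_R1: "Tr n (R1 v) r = Bf n v r v"
  unfolding Tr_def Bf_def R1_def
  by (subst sum.swap) (auto simp: algebra_simps intro!: sum.cong)

lemma Tr_rho_R1: "Tr n m (R1 v) = Bf n v m v"
  unfolding Tr_def Bf_def R1_def
  by (auto simp: algebra_simps intro!: sum.cong)

lemma Tr_rho_sum: "Tr n m (\<lambda>i k. \<Sum>j\<in>J. c j * R1 (w j) i k) = (\<Sum>j\<in>J. c j * Tr n m (R1 (w j)))"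
  unfolding Tr_def by (simp add: sum_distrib_left sum.swap[of _ J] algebra_simps)

lemma sum_split_prod: "(\<Sum>i<(m::nat)*D. g i) = (\<Sum>a<m. \<Sum>b<D. g (a*D+b))"
proof (induction m)
  case 0 then show ?case by simp
next
  case (Suc m)
  have "{..<Suc m * D} = {..<m*D} \<union> {m*D..<m*D+D}" by auto
  then have "(\<Sum>i<Suc m*D. g i) = sum g ({..<m*D} \<union> {m*D..<m*D+D})" by simp
  also have "\<dots> = (\<Sum>i<m*D. g i) + (\<Sum>i\<in>{m*D..<m*D+D}. g i)"
    by (rule sum.union_disjoint) auto
  also have "(\<Sum>i\<in>{m*D..<m*D+D}. g i) = (\<Sum>b<D. g (m*D+b))"
    using sum.shift_bounds_nat_ivl[of g 0 "m*D" D] by (simp add: lessThan_atLeast0 add.commute)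
  finally show ?case using Suc by simp
qed

lemma Bf_tens:
  assumes "D > 0"
  shows "Bf (D*D) (tens D u w) (KR D X Y) (tens D u' w') = Bf D u X u' * Bf D w Y w'"
proof -
  have "Bf (D*D) (tens D u w) (KR D X Y) (tens D u' w') =
    (\<Sum>a<D. \<Sum>b<D. \<Sum>c<D. \<Sum>e<D. (cnj (u a) * X a c * u' c) * (cnj (w b) * Y b e * w' e))"
    unfolding Bf_def tens_def KR_def
    apply (subst sum_split_prod)
    apply (subst sum_split_prod)
    using assms by (auto intro!: sum.cong simp: algebra_simps sum_distrib_left)
  also have "\<dots> = Bf D u X u' * Bf D w Y w'"
    unfolding Bf_def by (simp add: sum_product)
  finally show ?thesis .
qed

definition Pf :: "complex vec \<Rightarrow> nat \<Rightarrow> nat \<Rightarrow> complex" where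
  "Pf \<psi> = (\<lambda>i k. \<psi> $ i * cnj (\<psi> $ k))"

definition sig :: "nat \<Rightarrow> nat \<Rightarrow> nat" where
  "sig D i = (i mod D) * D + i div D"

lemma kron_carrier: "A \<in> carrier_mat D D \<Longrightarrow> B \<in> carrier_mat D D \<Longrightarrow> kron A B \<in> carrier_mat (D*D) (D*D)"
  unfolding kron_def by auto

lemma kron_ent: "A \<in> carrier_mat D D \<Longrightarrow> B \<in> carrier_mat D D \<Longrightarrow> i < D*D \<Longrightarrow> k < D*D \<Longrightarrow>
   kron A B $$ (i,k) = KR D (ent A) (ent B) i k"
  unfolding kron_def KR_def ent_def by auto

lemma ket_bra_carrier: "\<psi> \<in> carrier_vec D \<Longrightarrow> ket_bra \<psi> \<in> carrier_mat D D"
  unfolding ket_bra_def by auto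

lemma Omega_carrier: "\<psi> \<in> carrier_vec D \<Longrightarrow> Omega lam \<psi> \<in> carrier_mat D D"
  unfolding Omega_def ket_bra_def by auto

lemma ket_bra_ent: "\<psi> \<in> carrier_vec D \<Longrightarrow> i < D \<Longrightarrow> k < D \<Longrightarrow> ent (ket_bra \<psi>) i k = Pf \<psi> i k"
  unfolding ket_bra_def ent_def Pf_def by auto

lemma one_ent: "i < D \<Longrightarrow> k < D \<Longrightarrow> ent (1\<^sub>m D) i k = Idf i k"
  unfolding ent_def Idf_def by auto

lemma Omega_ent: "\<psi> \<in> carrier_vec D \<Longrightarrow> i < D \<Longrightarrow> k < D \<Longrightarrow>
   ent (Omega lam \<psi>) i k = (1 - of_real lam) * Pf \<psi> i k + of_real lam * Idf i k"
  unfolding Omega_def ket_bra_def ent_def Pf_def Idf_def by (auto simp: algebra_simps)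

lemma KR_ent:
  assumes "A \<in> carrier_mat D D" "B \<in> carrier_mat D D"
    "\<And>i k. i < D \<Longrightarrow> k < D \<Longrightarrow> ent A i k = X i k"
    "\<And>i k. i < D \<Longrightarrow> k < D \<Longrightarrow> ent B i k = Y i k"
    "i < D*D" "k < D*D"
  shows "ent (kron A B) i k = KR D X Y i k"
proof -
  have D: "D > 0" using assms(5) by (cases D) auto
  have "i div D < D" "k div D < D" "i mod D < D" "k mod D < D"
    using assms(5,6) D by (auto simp: less_mult_imp_div_less)
  then show ?thesis using assms unfolding ent_def[of "kron A B"]
    by (subst kron_ent) (auto simp: KR_def)
qed

lemma psd_Bf:
  assumes "psd n \<rho>"
  shows "Re (Bf n v (ent \<rho>) v) \<ge> 0"
proof -
  let ?v = "vec n v"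
  have c: "\<rho> \<in> carrier_mat n n" using assms unfolding psd_def by auto
  have "conjugate ?v \<bullet> (\<rho> *\<^sub>v ?v) = Bf n v (ent \<rho>) v"
    using c unfolding Bf_def ent_def
    by (auto simp: scalar_prod_def sum_distrib_left algebra_simps lessThan_atLeast0 intro!: sum.cong)
  moreover have "?v \<in> carrier_vec n" by auto
  ultimately show ?thesis using assms unfolding psd_def by metis
qed

lemma sig_props:
  assumes "i < D*D"
  shows "sig D i < D*D" "sig D (sig D i) = i" "sig D i div D = i mod D" "sig D i mod D = i div D"
proof -
  have D: "D > 0" using assms by (cases D) auto
  have a: "i div D < D" "i mod D < D" using assms D by (auto simp: less_mult_imp_div_less)
  show 1: "sig D i div D = i mod D" "sig D i mod D = i div D" using a D unfolding sig_def by auto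
  have "(i mod D)*D + i div D < (i mod D)*D + D" using a by simp
  also have "\<dots> = (i mod D + 1) * D" by simp
  also have "\<dots> \<le> D * D" using a(2) by (intro mult_right_mono) auto
  finally show "sig D i < D*D" unfolding sig_def .
  show "sig D (sig D i) = i" using 1 unfolding sig_def[of D "sig D i"] by simp
qed

lemma sig_bij: "bij_betw (sig D) {..<D*D} {..<D*D}"
  by (rule bij_betw_byWitness[where f' = "sig D"]) (auto simp: sig_props)

lemma delta_sum1: "s < (n::nat) \<Longrightarrow> (\<Sum>j<n. (if j = s then 1 else 0) * f j) = (f s :: complex)"
proof -
  assume "s < n"
  have "(\<Sum>j<n. (if j = s then 1 else 0) * f j) = (\<Sum>j<n. if j = s then f j else 0)" by (rule sum.cong) auto
  also have "\<dots> = f s" using \<open>s < n\<close> by simp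
  finally show ?thesis .
qed

lemma delta_sum2: "s < (n::nat) \<Longrightarrow> (\<Sum>j<n. f j * (if j = s then 1 else 0)) = (f s :: complex)"
  using delta_sum1[of s n f] by (simp add: mult.commute)

lemma sig_reindex2: "(\<Sum>i<D*D. \<Sum>k<D*D. g i k) = (\<Sum>i<D*D. \<Sum>k<D*D. g (sig D i) (sig D k))"
proof -
  have "(\<Sum>i<D*D. \<Sum>k<D*D. g i k) = (\<Sum>i<D*D. (\<lambda>i. \<Sum>k<D*D. g i k) (sig D i))"
    by (rule sum.reindex_bij_betw[OF sig_bij, symmetric])
  also have "\<dots> = (\<Sum>i<D*D. \<Sum>k<D*D. g (sig D i) (sig D k))"
    by (rule sum.cong[OF refl]) (rule sum.reindex_bij_betw[OF sig_bij, symmetric])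
  finally show ?thesis .
qed

lemma swap_ent: "i < D*D \<Longrightarrow> l < D*D \<Longrightarrow> swap_op D $$ (i,l) = (if l = sig D i then 1 else 0)"
proof -
  assume a: "i < D*D" "l < D*D"
  have "(i = sig D l) = (l = sig D i)" using sig_props[OF a(1)] sig_props[OF a(2)] by metis
  then show ?thesis using a unfolding swap_op_def by (simp add: sig_def)
qed

lemma swap_conj_ent:
  assumes "\<rho> \<in> carrier_mat (D*D) (D*D)" "i < D*D" "k < D*D"
  shows "(swap_op D * \<rho> * swap_op D) $$ (i,k) = \<rho> $$ (sig D i, sig D k)"
proof -
  have sc: "swap_op D \<in> carrier_mat (D*D) (D*D)" unfolding swap_op_def by auto
  have 1: "(swap_op D * \<rho>) $$ (i,l) = \<rho> $$ (sig D i, l)" if "l < D*D" for l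
  proof -
    have "(swap_op D * \<rho>) $$ (i,l) = (\<Sum>j<D*D. (if j = sig D i then 1 else 0) * \<rho> $$ (j, l))"
      using assms sc that by (auto simp: scalar_prod_def lessThan_atLeast0 swap_ent intro!: sum.cong split del: if_split)
    also have "\<dots> = \<rho> $$ (sig D i, l)" using assms(2) by (simp add: sig_props delta_sum1)
    finally show ?thesis .
  qed
  have "(swap_op D * \<rho> * swap_op D) $$ (i,k) = row (swap_op D * \<rho>) i \<bullet> col (swap_op D) k"
    using assms sc by (intro index_mult_mat) auto
  also have "\<dots> = (\<Sum>l<D*D. \<rho> $$ (sig D i, l) * (if k = sig D l then 1 else 0))"
    unfolding scalar_prod_def using assms sc
    by (intro sum.cong) (auto simp: lessThan_atLeast0 swap_ent 1[symmetric] split del: if_split)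
  also have "\<dots> = (\<Sum>l<D*D. \<rho> $$ (sig D i, l) * (if l = sig D k then 1 else 0))"
    by (rule sum.cong) (auto simp: sig_props assms)
  also have "\<dots> = \<rho> $$ (sig D i, sig D k)" using assms(3) by (simp add: sig_props delta_sum2)
  finally show ?thesis .
qed

lemma Tr_swap:
  assumes "\<rho> \<in> carrier_mat (D*D) (D*D)" "perm_inv2 D \<rho>"
  shows "Tr (D*D) (KR D X Y) (ent \<rho>) = Tr (D*D) (KR D Y X) (ent \<rho>)"
proof -
  have r: "ent \<rho> k i = ent \<rho> (sig D k) (sig D i)" if "k < D*D" "i < D*D" for i k
    using swap_conj_ent[OF assms(1) that] assms(2) unfolding perm_inv2_def ent_def by simp
  have "Tr (D*D) (KR D X Y) (ent \<rho>) = (\<Sum>i<D*D. \<Sum>k<D*D. KR D X Y i k * ent \<rho> (sig D k) (sig D i))"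
    unfolding Tr_def by (auto simp: r intro!: sum.cong)
  also have "\<dots> = (\<Sum>i<D*D. \<Sum>k<D*D. KR D X Y (sig D i) (sig D k) * ent \<rho> (sig D (sig D k)) (sig D (sig D i)))"
    by (rule sig_reindex2)
  also have "\<dots> = Tr (D*D) (KR D Y X) (ent \<rho>)"
    unfolding Tr_def by (auto simp: sig_props KR_def intro!: sum.cong)
  finally show ?thesis .
qed

definition Qf :: "complex vec \<Rightarrow> nat \<Rightarrow> nat \<Rightarrow> complex" where
  "Qf \<psi> = (\<lambda>i k. Idf i k - Pf \<psi> i k)"

lemma norm1: "(\<Sum>i<D. (cmod (\<psi> $ i))\<^sup>2) = 1 \<Longrightarrow> (\<Sum>j<D. \<psi> $ j * cnj (\<psi> $ j)) = 1"
proof -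
  assume a: "(\<Sum>i<D. (cmod (\<psi> $ i))\<^sup>2) = 1"
  have "(\<Sum>j<D. \<psi> $ j * cnj (\<psi> $ j)) = (\<Sum>j<D. complex_of_real ((cmod (\<psi> $ j))\<^sup>2))"
    by (rule sum.cong) (simp_all only: complex_norm_square)
  also have "\<dots> = 1" using a by (simp only: of_real_sum[symmetric]) simp
  finally show ?thesis .
qed

lemma Q_decomp:
  assumes n1: "(\<Sum>j<D. \<psi> $ j * cnj (\<psi> $ j)) = 1" and b: "b < D" "b' < D"
  shows "Qf \<psi> b b' = (\<Sum>j<D. Qf \<psi> b j * cnj (Qf \<psi> b' j))"
proof -
  let ?p = "\<lambda>j. \<psi> $ j"
  have e: "Qf \<psi> b j * cnj (Qf \<psi> b' j) = (if j = b then (if j = b' then 1 else 0) - cnj (?p b') * ?p j else 0)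
      - ?p b * cnj (?p j) * (if j = b' then 1 else 0) + ?p b * cnj (?p b') * (?p j * cnj (?p j))" for j
    unfolding Qf_def Idf_def Pf_def by (auto simp: algebra_simps)
  have "(\<Sum>j<D. Qf \<psi> b j * cnj (Qf \<psi> b' j)) =
     (\<Sum>j<D. (if j = b then (if j = b' then 1 else 0) - cnj (?p b') * ?p j else 0))
      - (\<Sum>j<D. ?p b * cnj (?p j) * (if j = b' then 1 else 0)) + ?p b * cnj (?p b') * (\<Sum>j<D. ?p j * cnj (?p j))"
    unfolding e by (simp add: sum.distrib sum_subtractf sum_distrib_left)
  also have "\<dots> = Qf \<psi> b b'"
    using b n1 unfolding Qf_def Idf_def Pf_def by (simp add: delta_sum2)
  finally show ?thesis by simp
qed

lemma Tr_add: "Tr n (\<lambda>i k. m1 i k + m2 i k) r = Tr n m1 r + Tr n m2 r"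
  unfolding Tr_def by (simp add: sum.distrib algebra_simps)
lemma Tr_diff: "Tr n (\<lambda>i k. m1 i k - m2 i k) r = Tr n m1 r - Tr n m2 r"
  unfolding Tr_def by (simp add: sum_subtractf algebra_simps)
lemma Tr_smult: "Tr n (\<lambda>i k. c * m1 i k) r = c * Tr n m1 r"
  unfolding Tr_def by (simp add: sum_distrib_left algebra_simps)

lemma Tr_Idf:
  assumes "\<rho> \<in> carrier_mat (D*D) (D*D)"
  shows "Tr (D*D) (KR D Idf Idf) (ent \<rho>) = mtrace \<rho>"
proof -
  have "Tr (D*D) (KR D Idf Idf) (ent \<rho>) = Tr (D*D) Idf (ent \<rho>)"
  proof (rule Tr_cong)
    fix i k assume "i < D*D" "k < D*D"
    have "(i div D = k div D \<and> i mod D = k mod D) = (i = k)"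
      by (metis div_mult_mod_eq)
    then show "KR D Idf Idf i k = Idf i k" unfolding KR_def Idf_def by auto
  qed
  also have "\<dots> = (\<Sum>i<D*D. ent \<rho> i i)"
    unfolding Tr_def Idf_def
  proof (rule sum.cong[OF refl])
    fix i assume i: "i \<in> {..<D*D}"
    have "(\<Sum>k<D*D. (if i = k then 1 else 0) * ent \<rho> k i) = (\<Sum>k<D*D. if k = i then ent \<rho> k i else 0)"
      by (rule sum.cong) auto
    also have "\<dots> = ent \<rho> i i" using i by simp
    finally show "(\<Sum>k<D*D. (if i = k then 1 else 0) * ent \<rho> k i) = ent \<rho> i i" .
  qed
  also have "\<dots> = mtrace \<rho>" using assms unfolding mtrace_def ent_def by simp
  finally show ?thesis .
qed

lemma Re_Tr_R1_nonneg: "psd n \<rho> \<Longrightarrow> Re (Tr n (R1 v) (ent \<rho>)) \<ge> 0"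
  by (simp add: Tr_R1 psd_Bf)

lemma lower_AB:
  assumes D: "D > 0" and psi: "\<psi> \<in> carrier_vec D" and n1: "(\<Sum>i<D. (cmod (\<psi> $ i))\<^sup>2) = 1"
    and rho: "density_op (D*D) \<rho>" "perm_inv2 D \<rho>"
  shows "\<exists>A B. A \<ge> 0 \<and> B - A \<ge> 0 \<and> 1 - 2*B + A \<ge> 0 \<and>
     p_val lam \<psi> \<rho> = (1 - lam) * B + lam \<and> f_val lam \<psi> \<rho> = (1 - lam) * A + lam * B"
proof -
  let ?n = "D*D"
  let ?r = "ent \<rho>"
  have psd: "psd ?n \<rho>" and tr: "mtrace \<rho> = 1" using rho unfolding density_op_def by auto
  have rc: "\<rho> \<in> carrier_mat ?n ?n" using psd unfolding psd_def by auto
  have dv: "dim_vec \<psi> = D" using psi by auto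
  have n1': "(\<Sum>j<D. \<psi> $ j * cnj (\<psi> $ j)) = 1" using n1 by (rule norm1)
  define tPP where "tPP = Tr ?n (KR D (Pf \<psi>) (Pf \<psi>)) ?r"
  define tP1 where "tP1 = Tr ?n (KR D (Pf \<psi>) Idf) ?r"
  define t1P where "t1P = Tr ?n (KR D Idf (Pf \<psi>)) ?r"
  define t11 where "t11 = Tr ?n (KR D Idf Idf) ?r"
  have t11: "t11 = 1" unfolding t11_def using Tr_Idf[OF rc] tr by simp
  have t1P: "t1P = tP1" unfolding t1P_def tP1_def by (rule Tr_swap[OF rc rho(2)])
  have dm: "i div D < D" "i mod D < D" if "i < ?n" for i using that D by (auto simp: less_mult_imp_div_less)
  have "KR D (Pf \<psi>) (Pf \<psi>) = R1 (tens D (\<lambda>i. \<psi> $ i) (\<lambda>i. \<psi> $ i))"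
    unfolding KR_def R1_def tens_def Pf_def by (simp add: fun_eq_iff algebra_simps)
  then have A0: "Re tPP \<ge> 0" unfolding tPP_def using Re_Tr_R1_nonneg[OF psd] by simp
  have "Tr ?n (KR D (Pf \<psi>) (Qf \<psi>)) ?r = Tr ?n (\<lambda>i k. \<Sum>l<D. R1 (\<lambda>i. \<psi> $ (i div D) * Qf \<psi> (i mod D) l) i k) ?r"
  proof (rule Tr_cong)
    fix i k assume ik: "i < ?n" "k < ?n"
    show "KR D (Pf \<psi>) (Qf \<psi>) i k = (\<Sum>l<D. R1 (\<lambda>i. \<psi> $ (i div D) * Qf \<psi> (i mod D) l) i k)"
      unfolding KR_def R1_def
      apply (subst Q_decomp[OF n1' dm(2)[OF ik(1)] dm(2)[OF ik(2)]])
      by (simp add: sum_distrib_left Pf_def algebra_simps)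
  qed
  also have "\<dots> = (\<Sum>l<D. Tr ?n (R1 (\<lambda>i. \<psi> $ (i div D) * Qf \<psi> (i mod D) l)) ?r)"
    by (rule Tr_sum)
  finally have eBA: "Tr ?n (KR D (Pf \<psi>) (Qf \<psi>)) ?r = \<dots>" .
  have "Re (Tr ?n (KR D (Pf \<psi>) (Qf \<psi>)) ?r) \<ge> 0"
    unfolding eBA Re_sum by (rule sum_nonneg) (rule Re_Tr_R1_nonneg[OF psd])
  moreover have "KR D (Pf \<psi>) (Qf \<psi>) = (\<lambda>i k. KR D (Pf \<psi>) Idf i k - KR D (Pf \<psi>) (Pf \<psi>) i k)"
    unfolding KR_def Qf_def by (simp add: fun_eq_iff algebra_simps)
  ultimately have BA: "Re tP1 - Re tPP \<ge> 0" unfolding tP1_def tPP_def by (simp add: Tr_diff)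
  have "Tr ?n (KR D (Qf \<psi>) (Qf \<psi>)) ?r = Tr ?n (\<lambda>i k. \<Sum>j<D. \<Sum>l<D. R1 (\<lambda>i. Qf \<psi> (i div D) j * Qf \<psi> (i mod D) l) i k) ?r"
  proof (rule Tr_cong)
    fix i k assume ik: "i < ?n" "k < ?n"
    show "KR D (Qf \<psi>) (Qf \<psi>) i k = (\<Sum>j<D. \<Sum>l<D. R1 (\<lambda>i. Qf \<psi> (i div D) j * Qf \<psi> (i mod D) l) i k)"
      unfolding KR_def R1_def
      apply (subst Q_decomp[OF n1' dm(1)[OF ik(1)] dm(1)[OF ik(2)]])
      apply (subst Q_decomp[OF n1' dm(2)[OF ik(1)] dm(2)[OF ik(2)]])
      by (simp add: sum_product algebra_simps)
  qed
  also have "\<dots> = (\<Sum>j<D. \<Sum>l<D. Tr ?n (R1 (\<lambda>i. Qf \<psi> (i div D) j * Qf \<psi> (i mod D) l)) ?r)"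
    by (simp add: Tr_sum)
  finally have eQQ: "Tr ?n (KR D (Qf \<psi>) (Qf \<psi>)) ?r = \<dots>" .
  have "Re (Tr ?n (KR D (Qf \<psi>) (Qf \<psi>)) ?r) \<ge> 0"
    unfolding eQQ Re_sum by (intro sum_nonneg) (rule Re_Tr_R1_nonneg[OF psd])
  moreover have "KR D (Qf \<psi>) (Qf \<psi>) = (\<lambda>i k. KR D Idf Idf i k - KR D (Pf \<psi>) Idf i k - KR D Idf (Pf \<psi>) i k + KR D (Pf \<psi>) (Pf \<psi>) i k)"
    unfolding KR_def Qf_def by (simp add: fun_eq_iff algebra_simps)
  ultimately have QQ: "1 - 2 * Re tP1 + Re tPP \<ge> 0"
    using t11 t1P unfolding tP1_def tPP_def t11_def t1P_def by (simp add: Tr_diff Tr_add)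
  have Oc: "Omega lam \<psi> \<in> carrier_mat D D" by (rule Omega_carrier[OF psi])
  have kc: "ket_bra \<psi> \<in> carrier_mat D D" by (rule ket_bra_carrier[OF psi])
  have 1: "1\<^sub>m D \<in> carrier_mat D D" by simp
  let ?Om = "\<lambda>i k. (1 - complex_of_real lam) * Pf \<psi> i k + complex_of_real lam * Idf i k"
  have "p_val lam \<psi> \<rho> = Re (Tr ?n (ent (kron (Omega lam \<psi>) (1\<^sub>m D))) ?r)"
    unfolding p_val_def dv by (subst mtrace_mult[OF kron_carrier[OF Oc 1] rc]) simp
  also have "Tr ?n (ent (kron (Omega lam \<psi>) (1\<^sub>m D))) ?r = Tr ?n (KR D ?Om Idf) ?r"
    by (rule Tr_cong, rule KR_ent[OF Oc 1]) (auto simp: Omega_ent[OF psi] one_ent)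
  also have "KR D ?Om Idf = (\<lambda>i k. (1 - complex_of_real lam) * KR D (Pf \<psi>) Idf i k + complex_of_real lam * KR D Idf Idf i k)"
    unfolding KR_def by (simp add: fun_eq_iff algebra_simps)
  finally have p: "p_val lam \<psi> \<rho> = (1 - lam) * Re tP1 + lam"
    using t11 unfolding tP1_def t11_def by (simp add: Tr_add Tr_smult)
  have "f_val lam \<psi> \<rho> = Re (Tr ?n (ent (kron (Omega lam \<psi>) (ket_bra \<psi>))) ?r)"
    unfolding f_val_def by (subst mtrace_mult[OF kron_carrier[OF Oc kc] rc]) simp
  also have "Tr ?n (ent (kron (Omega lam \<psi>) (ket_bra \<psi>))) ?r = Tr ?n (KR D ?Om (Pf \<psi>)) ?r"
    by (rule Tr_cong, rule KR_ent[OF Oc kc]) (auto simp: Omega_ent[OF psi] ket_bra_ent[OF psi])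
  also have "KR D ?Om (Pf \<psi>) = (\<lambda>i k. (1 - complex_of_real lam) * KR D (Pf \<psi>) (Pf \<psi>) i k + complex_of_real lam * KR D Idf (Pf \<psi>) i k)"
    unfolding KR_def by (simp add: fun_eq_iff algebra_simps)
  finally have f: "f_val lam \<psi> \<rho> = (1 - lam) * Re tPP + lam * Re tP1"
    using t1P unfolding tPP_def t1P_def tP1_def by (simp add: Tr_add Tr_smult)
  show ?thesis using A0 BA QQ p f by blast
qed

lemma qf_Bf:
  assumes "\<rho> \<in> carrier_mat n n" "v \<in> carrier_vec n"
  shows "conjugate v \<bullet> (\<rho> *\<^sub>v v) = Bf n (\<lambda>i. v $ i) (ent \<rho>) (\<lambda>i. v $ i)"
  using assms unfolding Bf_def ent_def
  by (auto simp: scalar_prod_def sum_distrib_left algebra_simps lessThan_atLeast0 intro!: sum.cong)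

lemma Bf_cong:
  assumes "\<And>i k. i < n \<Longrightarrow> k < n \<Longrightarrow> m i k = m' i k"
  shows "Bf n x m y = Bf n x m' y"
  using assms unfolding Bf_def by (auto intro!: sum.cong)

lemma Bf_sum: "Bf n x (\<lambda>i k. \<Sum>j\<in>J. c j * m j i k) y = (\<Sum>j\<in>J. c j * Bf n x (m j) y)"
  unfolding Bf_def by (simp add: sum_distrib_left sum_distrib_right sum.swap[of _ J] algebra_simps)

lemma Bf_R1: "Bf n x (R1 w) x = complex_of_real ((cmod (\<Sum>i<n. cnj (x i) * w i))\<^sup>2)"
proof -
  have "Bf n x (R1 w) x = (\<Sum>i<n. cnj (x i) * w i) * cnj (\<Sum>i<n. cnj (x i) * w i)"
    unfolding Bf_def R1_def by (simp add: sum_product algebra_simps)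
  then show ?thesis unfolding complex_norm_square .
qed

lemma Tr_cong_r:
  assumes "\<And>i k. i < n \<Longrightarrow> k < n \<Longrightarrow> r i k = r' i k"
  shows "Tr n m r = Tr n m r'"
  using assms unfolding Tr_def by (auto intro!: sum.cong)

definition rho0 :: "nat \<Rightarrow> nat set \<Rightarrow> (nat \<Rightarrow> real) \<Rightarrow> (nat \<Rightarrow> nat \<Rightarrow> complex) \<Rightarrow> (nat \<Rightarrow> nat \<Rightarrow> complex) \<Rightarrow> complex mat" where
  "rho0 D J c u w = mat (D*D) (D*D) (\<lambda>(i,k). \<Sum>j\<in>J. complex_of_real (c j) * R1 (tens D (u j) (w j)) i k)"

lemma rho0_carrier: "rho0 D J c u w \<in> carrier_mat (D*D) (D*D)"
  unfolding rho0_def by auto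

lemma rho0_psd:
  assumes "\<And>j. j \<in> J \<Longrightarrow> c j \<ge> 0"
  shows "psd (D*D) (rho0 D J c u w)"
  unfolding psd_def
proof (intro conjI ballI)
  show "rho0 D J c u w \<in> carrier_mat (D*D) (D*D)" by (rule rho0_carrier)
  fix v :: "complex vec" assume v: "v \<in> carrier_vec (D*D)"
  let ?x = "\<lambda>i. v $ i"
  have "conjugate v \<bullet> (rho0 D J c u w *\<^sub>v v) = Bf (D*D) ?x (ent (rho0 D J c u w)) ?x"
    by (rule qf_Bf[OF rho0_carrier v])
  also have "\<dots> = Bf (D*D) ?x (\<lambda>i k. \<Sum>j\<in>J. complex_of_real (c j) * R1 (tens D (u j) (w j)) i k) ?x"
    by (rule Bf_cong) (simp add: rho0_def ent_def)
  also have "\<dots> = (\<Sum>j\<in>J. complex_of_real (c j) * Bf (D*D) ?x (R1 (tens D (u j) (w j))) ?x)"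
    by (rule Bf_sum)
  also have "\<dots> = complex_of_real (\<Sum>j\<in>J. c j * (cmod (\<Sum>i<D*D. cnj (?x i) * tens D (u j) (w j) i))\<^sup>2)"
    by (simp add: Bf_R1)
  finally have e: "conjugate v \<bullet> (rho0 D J c u w *\<^sub>v v) = \<dots>" .
  show "Im (conjugate v \<bullet> (rho0 D J c u w *\<^sub>v v)) = 0" unfolding e by simp
  show "Re (conjugate v \<bullet> (rho0 D J c u w *\<^sub>v v)) \<ge> 0" unfolding e using assms
    by (simp add: sum_nonneg)
qed

lemma rho0_Tr:
  assumes "D > 0"
  shows "Tr (D*D) (KR D X Y) (ent (rho0 D J c u w)) =
    (\<Sum>j\<in>J. complex_of_real (c j) * (Bf D (u j) X (u j) * Bf D (w j) Y (w j)))"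
proof -
  have "Tr (D*D) (KR D X Y) (ent (rho0 D J c u w)) =
     Tr (D*D) (KR D X Y) (\<lambda>i k. \<Sum>j\<in>J. complex_of_real (c j) * R1 (tens D (u j) (w j)) i k)"
    by (rule Tr_cong_r) (simp add: rho0_def ent_def)
  also have "\<dots> = (\<Sum>j\<in>J. complex_of_real (c j) * Tr (D*D) (KR D X Y) (R1 (tens D (u j) (w j))))"
    by (rule Tr_rho_sum)
  also have "\<dots> = (\<Sum>j\<in>J. complex_of_real (c j) * (Bf D (u j) X (u j) * Bf D (w j) Y (w j)))"
    by (simp add: Tr_rho_R1 Bf_tens[OF assms])
  finally show ?thesis .
qed

lemma R1_tens_sig:
  assumes "i < D*D" "k < D*D"
  shows "R1 (tens D u w) (sig D i) (sig D k) = R1 (tens D w u) i k"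
  using assms unfolding R1_def tens_def by (simp add: sig_props)

lemma BfP: "Bf D x (Pf \<psi>) x = (\<Sum>i<D. cnj (x i) * \<psi> $ i) * (\<Sum>k<D. cnj (\<psi> $ k) * x k)"
  unfolding Bf_def Pf_def sum_product by (auto intro!: sum.cong simp: algebra_simps)

lemma BfI: "Bf D x Idf x = (\<Sum>i<D. cnj (x i) * x i)"
  unfolding Bf_def Idf_def
proof (rule sum.cong[OF refl])
  fix i assume i: "i \<in> {..<D}"
  have "(\<Sum>k<D. cnj (x i) * (if i = k then 1 else 0) * x k) = (\<Sum>k<D. if k = i then cnj (x i) * x k else 0)"
    by (rule sum.cong) auto
  also have "\<dots> = cnj (x i) * x i" using i by simp
  finally show "(\<Sum>k<D. cnj (x i) * (if i = k then 1 else 0) * x k) = cnj (x i) * x i" .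
qed

lemma p_Tr:
  assumes psi: "\<psi> \<in> carrier_vec D" and rc: "\<rho> \<in> carrier_mat (D*D) (D*D)"
  shows "p_val lam \<psi> \<rho> = Re (Tr (D*D) (KR D (\<lambda>i k. (1 - complex_of_real lam) * Pf \<psi> i k + complex_of_real lam * Idf i k) Idf) (ent \<rho>))"
proof -
  have dv: "dim_vec \<psi> = D" using psi by auto
  have Oc: "Omega lam \<psi> \<in> carrier_mat D D" by (rule Omega_carrier[OF psi])
  have 1: "1\<^sub>m D \<in> carrier_mat D D" by simp
  let ?Om = "\<lambda>i k. (1 - complex_of_real lam) * Pf \<psi> i k + complex_of_real lam * Idf i k"
  have "p_val lam \<psi> \<rho> = Re (Tr (D*D) (ent (kron (Omega lam \<psi>) (1\<^sub>m D))) (ent \<rho>))"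
    unfolding p_val_def dv by (subst mtrace_mult[OF kron_carrier[OF Oc 1] rc]) simp
  also have "Tr (D*D) (ent (kron (Omega lam \<psi>) (1\<^sub>m D))) (ent \<rho>) = Tr (D*D) (KR D ?Om Idf) (ent \<rho>)"
    by (rule Tr_cong, rule KR_ent[OF Oc 1]) (auto simp: Omega_ent[OF psi] one_ent)
  finally show ?thesis .
qed

lemma f_Tr:
  assumes psi: "\<psi> \<in> carrier_vec D" and rc: "\<rho> \<in> carrier_mat (D*D) (D*D)"
  shows "f_val lam \<psi> \<rho> = Re (Tr (D*D) (KR D (\<lambda>i k. (1 - complex_of_real lam) * Pf \<psi> i k + complex_of_real lam * Idf i k) (Pf \<psi>)) (ent \<rho>))"
proof -
  have Oc: "Omega lam \<psi> \<in> carrier_mat D D" by (rule Omega_carrier[OF psi])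
  have kc: "ket_bra \<psi> \<in> carrier_mat D D" by (rule ket_bra_carrier[OF psi])
  let ?Om = "\<lambda>i k. (1 - complex_of_real lam) * Pf \<psi> i k + complex_of_real lam * Idf i k"
  have "f_val lam \<psi> \<rho> = Re (Tr (D*D) (ent (kron (Omega lam \<psi>) (ket_bra \<psi>))) (ent \<rho>))"
    unfolding f_val_def by (subst mtrace_mult[OF kron_carrier[OF Oc kc] rc]) simp
  also have "Tr (D*D) (ent (kron (Omega lam \<psi>) (ket_bra \<psi>))) (ent \<rho>) = Tr (D*D) (KR D ?Om (Pf \<psi>)) (ent \<rho>)"
    by (rule Tr_cong, rule KR_ent[OF Oc kc]) (auto simp: Omega_ent[OF psi] ket_bra_ent[OF psi])
  finally show ?thesis .
qed

lemma construct:
  assumes D: "D > 0" and psi: "\<psi> \<in> carrier_vec D"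
    and n1: "(\<Sum>i<D. cnj (\<psi> $ i) * \<psi> $ i) = 1"
    and n2: "(\<Sum>i<D. cnj (\<phi> i) * \<phi> i) = 1"
    and orth: "(\<Sum>i<D. cnj (\<phi> i) * \<psi> $ i) = 0"
    and abd: "a \<ge> 0" "b \<ge> 0" "d \<ge> 0" "a + 2*b + d = 1"
  shows "\<exists>\<rho>. density_op (D*D) \<rho> \<and> perm_inv2 D \<rho> \<and>
     p_val lam \<psi> \<rho> = a + b*(1+lam) + d*lam \<and> f_val lam \<psi> \<rho> = a + b*lam"
proof -
  let ?p = "\<lambda>i. \<psi> $ i"
  define J :: "nat set" where "J = {0,1,2,3}"
  define u where "u = (\<lambda>j::nat. if j = 0 \<or> j = 1 then ?p else \<phi>)"
  define w where "w = (\<lambda>j::nat. if j = 0 \<or> j = 2 then ?p else \<phi>)"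
  define c where "c = (\<lambda>j::nat. if j = 0 then a else if j = 3 then d else b)"
  define \<rho> where "\<rho> = rho0 D J c u w"
  have rc: "\<rho> \<in> carrier_mat (D*D) (D*D)" unfolding \<rho>_def by (rule rho0_carrier)
  have psd: "psd (D*D) \<rho>" unfolding \<rho>_def
    by (rule rho0_psd) (auto simp: c_def abd)
  have BPp: "Bf D ?p (Pf \<psi>) ?p = 1" unfolding BfP using n1 by simp
  have BPf: "Bf D \<phi> (Pf \<psi>) \<phi> = 0" unfolding BfP using orth by simp
  have BIp: "Bf D ?p Idf ?p = 1" unfolding BfI using n1 by simp
  have BIf: "Bf D \<phi> Idf \<phi> = 1" unfolding BfI using n2 by simp
  have BOp: "Bf D ?p (\<lambda>i k. (1 - complex_of_real lam) * Pf \<psi> i k + complex_of_real lam * Idf i k) ?p = 1"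
    by (simp add: Bf_lin BPp BIp)
  have BOf: "Bf D \<phi> (\<lambda>i k. (1 - complex_of_real lam) * Pf \<psi> i k + complex_of_real lam * Idf i k) \<phi> = lam"
    by (simp add: Bf_lin BPf BIf)
  have abdc: "complex_of_real a + (2 * complex_of_real b + complex_of_real d) = 1"
    using arg_cong[OF abd(4), of complex_of_real] by (simp add: add.assoc)
  have tr: "mtrace \<rho> = 1"
    using abdc Tr_Idf[OF rc] rho0_Tr[OF D, of Idf Idf J c u w] abd(4)
    unfolding \<rho>_def J_def by (simp add: u_def w_def c_def BIp BIf)
  have pv: "p_val lam \<psi> \<rho> = a + b*(1+lam) + d*lam"
    unfolding p_Tr[OF psi rc] unfolding \<rho>_def rho0_Tr[OF D] J_def
    by (simp add: u_def w_def c_def BOp BOf BIp BIf) (simp add: algebra_simps)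
  have fv: "f_val lam \<psi> \<rho> = a + b*lam"
    unfolding f_Tr[OF psi rc] unfolding \<rho>_def rho0_Tr[OF D] J_def
    by (simp add: u_def w_def c_def BOp BOf BPp BPf)
  have pinv: "perm_inv2 D \<rho>" unfolding perm_inv2_def
  proof (rule eq_matI)
    fix i k assume ik: "i < dim_row \<rho>" "k < dim_col \<rho>"
    then have ik': "i < D*D" "k < D*D" using rc by auto
    have "(swap_op D * \<rho> * swap_op D) $$ (i,k) = \<rho> $$ (sig D i, sig D k)"
      by (rule swap_conj_ent[OF rc ik'])
    also have "\<dots> = (\<Sum>j\<in>J. complex_of_real (c j) * R1 (tens D (w j) (u j)) i k)"
      unfolding \<rho>_def rho0_def using ik' by (simp add: sig_props R1_tens_sig)
    also have "\<dots> = \<rho> $$ (i,k)"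
      unfolding \<rho>_def rho0_def J_def using ik' by (simp add: u_def w_def c_def algebra_simps)
    finally show "(swap_op D * \<rho> * swap_op D) $$ (i,k) = \<rho> $$ (i,k)" .
  next
    show "dim_row (swap_op D * \<rho> * swap_op D) = dim_row \<rho>" "dim_col (swap_op D * \<rho> * swap_op D) = dim_col \<rho>"
      using rc by (auto simp: swap_op_def)
  qed
  show ?thesis using psd tr pinv pv fv unfolding density_op_def by blast
qed

lemma sum_two:
  assumes "j < (D::nat)" "k < D" "j \<noteq> k" "\<And>i. i \<noteq> j \<Longrightarrow> i \<noteq> k \<Longrightarrow> g i = (0::complex)"
  shows "(\<Sum>i<D. g i) = g j + g k"
proof -
  have "(\<Sum>i<D. g i) = (\<Sum>i\<in>{j,k}. g i)"
    by (rule sum.mono_neutral_right) (use assms in auto)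
  then show ?thesis using assms(3) by simp
qed

lemma exists_phi:
  assumes D: "D \<ge> 2" and n1: "(\<Sum>i<D. \<psi> $ i * cnj (\<psi> $ i)) = 1"
  shows "\<exists>\<phi>. (\<Sum>i<D. cnj (\<phi> i) * \<phi> i) = 1 \<and> (\<Sum>i<D. cnj (\<phi> i) * \<psi> $ i) = 0"
proof -
  obtain k where k: "k < D" "\<psi> $ k \<noteq> 0"
  proof (rule ccontr)
    assume "\<not> thesis"
    then have "\<forall>k<D. \<psi> $ k = 0" using that by blast
    then have "(\<Sum>i<D. \<psi> $ i * cnj (\<psi> $ i)) = 0" by simp
    then show False using n1 by simp
  qed
  define j where "j = (if k = 0 then 1 else 0::nat)"
  have j: "j < D" "j \<noteq> k" using D k unfolding j_def by auto
  define s where "s = sqrt ((cmod (\<psi> $ j))\<^sup>2 + (cmod (\<psi> $ k))\<^sup>2)"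
  have s2: "s\<^sup>2 = (cmod (\<psi> $ j))\<^sup>2 + (cmod (\<psi> $ k))\<^sup>2" unfolding s_def by simp
  have spos: "s > 0" unfolding s_def using k(2)
    by (intro real_sqrt_gt_zero) (simp add: add_nonneg_pos)
  define \<phi> where "\<phi> = (\<lambda>i. (if i = k then cnj (\<psi> $ j) else if i = j then - cnj (\<psi> $ k) else 0) / complex_of_real s)"
  have "(\<Sum>i<D. cnj (\<phi> i) * \<phi> i) = cnj (\<phi> j) * \<phi> j + cnj (\<phi> k) * \<phi> k"
    by (rule sum_two[OF j(1) k(1) j(2)]) (simp add: \<phi>_def)
  also have "\<dots> = (\<psi> $ k * cnj (\<psi> $ k) + \<psi> $ j * cnj (\<psi> $ j)) / complex_of_real (s\<^sup>2)"
    using j(2) spos unfolding \<phi>_def by (simp add: field_simps power2_eq_square)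
  also have "\<dots> = 1" unfolding complex_norm_square[symmetric] s2 using spos s2 k(2)
    by (simp add: of_real_add[symmetric] del: of_real_add) (simp add: add.commute)
  finally have 1: "(\<Sum>i<D. cnj (\<phi> i) * \<phi> i) = 1" .
  have "(\<Sum>i<D. cnj (\<phi> i) * \<psi> $ i) = cnj (\<phi> j) * \<psi> $ j + cnj (\<phi> k) * \<psi> $ k"
    by (rule sum_two[OF j(1) k(1) j(2)]) (simp add: \<phi>_def)
  also have "\<dots> = 0"
    using j(2) spos unfolding \<phi>_def by (simp add: field_simps)
  finally show ?thesis using 1 by blast
qed

lemma lower_arith:
  fixes l A B p f \<delta> :: real
  assumes l: "0 \<le> l" "l < 1" and A: "A \<ge> 0" "B - A \<ge> 0" "1 - 2*B + A \<ge> 0"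
    and p: "p = (1 - l) * B + l" and f: "f = (1 - l) * A + l * B" and pd: "p \<ge> \<delta>"
  shows "0 \<le> f" "l * (\<delta> - l) / (1 - l) \<le> f" "(\<delta> * (2 - l) - 1) / (1 - l) \<le> f"
proof -
  have l1: "1 - l > 0" using l by simp
  show "0 \<le> f" unfolding f using A l l1 by (intro add_nonneg_nonneg mult_nonneg_nonneg) auto
  have e1: "f * (1 - l) - l * (\<delta> - l) = (1 - l)\<^sup>2 * A + l * (p - \<delta>)"
    unfolding f p by (simp add: algebra_simps power2_eq_square)
  have "(1 - l)\<^sup>2 * A \<ge> 0" "l * (p - \<delta>) \<ge> 0" using A l pd by auto
  then have "l * (\<delta> - l) \<le> f * (1 - l)" using e1 by linarith
  then show "l * (\<delta> - l) / (1 - l) \<le> f" using l1 by (simp add: divide_le_eq)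
  have e2: "f * (1 - l) - (\<delta> * (2 - l) - 1) = (1 - l)\<^sup>2 * (1 - 2*B + A) + (2 - l) * (p - \<delta>)"
    unfolding f p by (simp add: algebra_simps power2_eq_square)
  have "(1 - l)\<^sup>2 * (1 - 2*B + A) \<ge> 0" "(2 - l) * (p - \<delta>) \<ge> 0" using A l pd by auto
  then have "\<delta> * (2 - l) - 1 \<le> f * (1 - l)" using e2 by linarith
  then show "(\<delta> * (2 - l) - 1) / (1 - l) \<le> f" using l1 by (simp add: divide_le_eq)
qed

theorem proposition2:
  fixes D :: nat and \<psi> :: "complex vec" and lam \<delta> :: real
  assumes "D \<ge> 2" and "unit_vec_C D \<psi>"
    and "0 \<le> lam" and "lam < 1"
    and "0 \<le> \<delta>" and "\<delta> \<le> 1"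
  shows "is_zeta1 D lam \<psi> \<delta>
           (Max {0, lam * (\<delta> - lam) / (1 - lam), (\<delta> * (2 - lam) - 1) / (1 - lam)})
       \<and> (\<delta> \<le> lam \<longrightarrow>
            Max {0, lam * (\<delta> - lam) / (1 - lam), (\<delta> * (2 - lam) - 1) / (1 - lam)} = 0)
       \<and> (lam \<le> \<delta> \<and> \<delta> \<le> (1 + lam) / 2 \<longrightarrow>
            Max {0, lam * (\<delta> - lam) / (1 - lam), (\<delta> * (2 - lam) - 1) / (1 - lam)}
              = lam * (\<delta> - lam) / (1 - lam))
       \<and> ((1 + lam) / 2 \<le> \<delta> \<longrightarrow>
            Max {0, lam * (\<delta> - lam) / (1 - lam), (\<delta> * (2 - lam) - 1) / (1 - lam)}
              = (\<delta> * (2 - lam) - 1) / (1 - lam))"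
proof -
  define x where "x = lam * (\<delta> - lam) / (1 - lam)"
  define y where "y = (\<delta> * (2 - lam) - 1) / (1 - lam)"
  have l1: "1 - lam > 0" using assms by simp
  have MX: "Max {0, x, y} = max 0 (max x y)" by simp
  have num: "lam*(\<delta>-lam) - (\<delta>*(2-lam)-1) = (1-lam)*(1+lam-2*\<delta>)" by (simp add: algebra_simps)
  have "x - y = (lam*(\<delta>-lam) - (\<delta>*(2-lam)-1))/(1-lam)" unfolding x_def y_def by (simp add: diff_divide_distrib)
  then have xy: "x - y = 1 + lam - 2 * \<delta>" using num l1 by simp
  have xpos: "\<delta> \<ge> lam \<Longrightarrow> x \<ge> 0" unfolding x_def using assms l1 by simp
  have xneg: "\<delta> \<le> lam \<Longrightarrow> x \<le> 0" unfolding x_def using assms l1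
    by (intro divide_nonpos_pos mult_nonneg_nonpos) auto
  have c1: "\<delta> \<le> lam \<Longrightarrow> Max {0, x, y} = 0" unfolding MX max_def using xy xneg assms by auto
  have c2: "lam \<le> \<delta> \<and> \<delta> \<le> (1 + lam) / 2 \<Longrightarrow> Max {0, x, y} = x" unfolding MX max_def using xy xpos by auto
  have c3: "(1 + lam) / 2 \<le> \<delta> \<Longrightarrow> Max {0, x, y} = y" unfolding MX max_def using xy xpos assms by auto
  have D0: "D > 0" and psi: "\<psi> \<in> carrier_vec D" and n1: "(\<Sum>i<D. (cmod (\<psi> $ i))\<^sup>2) = 1"
    using assms unfolding unit_vec_C_def by auto
  have n1': "(\<Sum>j<D. \<psi> $ j * cnj (\<psi> $ j)) = 1" using n1 by (rule norm1)
  have n1'': "(\<Sum>j<D. cnj (\<psi> $ j) * \<psi> $ j) = 1" using n1' by (simp add: mult.commute)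
  obtain \<phi> where phi: "(\<Sum>i<D. cnj (\<phi> i) * \<phi> i) = 1" "(\<Sum>i<D. cnj (\<phi> i) * \<psi> $ i) = 0"
    using exists_phi[OF assms(1) n1'] by blast
  note cons = construct[OF D0 psi n1'' phi]
  have low: "Max {0, x, y} \<le> f_val lam \<psi> \<rho>" if "\<rho> \<in> feasible1 D lam \<psi> \<delta>" for \<rho>
  proof -
    have r: "density_op (D*D) \<rho>" "perm_inv2 D \<rho>" "p_val lam \<psi> \<rho> \<ge> \<delta>"
      using that unfolding feasible1_def by auto
    obtain A B where AB: "A \<ge> 0" "B - A \<ge> 0" "1 - 2*B + A \<ge> 0"
      "p_val lam \<psi> \<rho> = (1 - lam) * B + lam" "f_val lam \<psi> \<rho> = (1 - lam) * A + lam * B"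
      using lower_AB[OF D0 psi n1 r(1,2)] by blast
    note L = lower_arith[OF assms(3,4) AB r(3)]
    show ?thesis unfolding MX x_def y_def using L by simp
  qed
  define t where "t = (\<delta> - lam) / (1 - lam)"
  have dt: "\<delta> = lam + t * (1 - lam)" unfolding t_def using l1 by simp
  have att: "\<exists>\<rho>\<in>feasible1 D lam \<psi> \<delta>. f_val lam \<psi> \<rho> = Max {0, x, y}"
  proof (cases "\<delta> \<le> lam")
    case True
    obtain \<rho> where "density_op (D*D) \<rho>" "perm_inv2 D \<rho>"
       "p_val lam \<psi> \<rho> = 0 + 0*(1+lam) + 1*lam" "f_val lam \<psi> \<rho> = 0 + 0*lam"
      using cons[of 0 0 1 lam] by auto
    then show ?thesis using True c1 unfolding feasible1_def by auto
  next
    case False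
    show ?thesis
    proof (cases "\<delta> \<le> (1 + lam) / 2")
      case True
      have "t*(1-lam) \<le> (1/2)*(1-lam)" using dt True by (simp add: algebra_simps)
      then have "t \<le> 1/2" by (meson l1 mult_right_le_imp_le)
      moreover have "t \<ge> 0" unfolding t_def using False l1 by simp
      ultimately have t0: "t \<ge> 0" "1 - 2*t \<ge> 0" by auto
      obtain \<rho> where "density_op (D*D) \<rho>" "perm_inv2 D \<rho>"
         "p_val lam \<psi> \<rho> = 0 + t*(1+lam) + (1-2*t)*lam" "f_val lam \<psi> \<rho> = 0 + t*lam"
        using cons[of 0 t "1-2*t" lam] t0 by auto
      moreover have "0 + t*(1+lam) + (1-2*t)*lam = \<delta>" using dt by (simp add: algebra_simps)
      moreover have "0 + t*lam = x" unfolding x_def t_def by simp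
      ultimately show ?thesis using True False c2 unfolding feasible1_def by auto
    next
      case False2: False
      have "1/2 \<le> t" unfolding t_def using l1 False2 by (simp add: le_divide_eq)
      moreover have "t \<le> 1" unfolding t_def using l1 assms(6) by (simp add: divide_le_eq)
      ultimately have t0: "2*t - 1 \<ge> 0" "1 - t \<ge> 0" by auto
      obtain \<rho> where "density_op (D*D) \<rho>" "perm_inv2 D \<rho>"
         "p_val lam \<psi> \<rho> = (2*t-1) + (1-t)*(1+lam) + 0*lam" "f_val lam \<psi> \<rho> = (2*t-1) + (1-t)*lam"
        using cons[of "2*t-1" "1-t" 0 lam] t0 by auto
      moreover have "(2*t-1) + (1-t)*(1+lam) + 0*lam = \<delta>" using dt by (simp add: algebra_simps)
      moreover have "(2*t-1) + (1-t)*lam = y"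
      proof -
        have "\<delta>*(2-lam)-1 = ((2*t-1) + (1-t)*lam) * (1-lam)" by (subst dt) (simp add: algebra_simps)
        then show ?thesis unfolding y_def using l1 by simp
      qed
      ultimately show ?thesis using False2 c3 unfolding feasible1_def by auto
    qed
  qed
  show ?thesis unfolding is_zeta1_def x_def[symmetric] y_def[symmetric]
    using att low c1 c2 c3 by auto
qed

end
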